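(* Let $\{(\mathcal{X}_l,\mathring{\mathcal{X}}_l,p_l)\}_{l\in\mathcal{I}}$ be $B$-$B$-bimodules with specified projections with reduced free product $(\mathcal{X},\mathring{\mathcal{X}},p)$, and for each $l$ let $S_l\subset\mathcal{A}_{l,\mathcal{F}}\cup\mathcal{A}_{l,\mathcal{B}}$. Let $i\ne j$ in $\mathcal{I}$, let $A_1\in\mathcal{A}_i$ be a simple product of elements from $S_i$ and $A_2\in\mathcal{A}_j$ a simple product of elements from $S_j$. If $A_1$ is a Boolean product, then $A_1A_2(1_B)=A_1\big(\mathbb{E}_{\mathcal{L}(\mathcal{X})}(A_2)\big)$, where $\mathbb{E}_{\mathcal{L}(\mathcal{X})}(A_2)\in B\subset\mathcal{X}$.
   Context: $B$ is a unital complex algebra. A $B$-$B$-bimodule with specified projection is a triple $(\mathcal{X},\mathring{\mathcal{X}},p)$ with $\mathcal{X}=B\oplus\mathring{\mathcal{X}}$ a direct sum of $B$-$B$-bimodules and $p(b\oplus\eta)=b$; $\mathcal{L}(\mathcal{X})$ is the algebra of linear operators on $\mathcal{X}$ respecting the bimodule structure and $\mathbb{E}_{\mathcal{L}(\mathcal{X})}(T)=p(T(1_B\oplus0))$. The reduced free product is $\mathcal{X}=B\oplus\mathring{\mathcal{X}}$ with $\mathring{\mathcal{X}}=\bigoplus_{n\ge1}\bigoplus_{i_1\ne\cdots\ne i_n}\mathring{\mathcal{X}}_{i_1}\otimes_B\cdots\otimes_B\mathring{\mathcal{X}}_{i_n}$ (consecutive indices distinct), $p$ the projection onto $B$. For $l\in\mathcal{I}$,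 $\mathcal{X}(l)=B\oplus\bigoplus_{n\ge1}\bigoplus_{i_1\ne\cdots\ne i_n,\ i_1\ne l}\mathring{\mathcal{X}}_{i_1}\otimes_B\cdots\otimes_B\mathring{\mathcal{X}}_{i_n}$, $V_l:\mathcal{X}\to\mathcal{X}_l\otimes_B\mathcal{X}(l)$ is the natural isomorphism, $\lambda_l(a)=V_l^{-1}(a\otimes I)V_l$, $P_l$ the projection onto the summand $B\oplus\mathring{\mathcal{X}}_l$ (zero on other summands), $\mathcal{A}_{l,\mathcal{F}}=\lambda_l(\mathcal{L}(\mathcal{X}_l))$, $\mathcal{A}_{l,\mathcal{B}}=P_l\lambda_l(\mathcal{L}(\mathcal{X}_l))P_l$, $\mathcal{A}_l$ the algebra generated by both. A product $a_1\cdots a_m$ with all $a_k\in S_l$ is a simple product of elements from $S_l$; it is a Boolean product if some $a_k\in S_l\cap\mathcal{A}_{l,\mathcal{B}}$. *)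

theory Defs
  imports Complex_Main
begin

class cplx_algebra_1 = ring_1 +
  fixes scaleC :: "complex \<Rightarrow> 'a \<Rightarrow> 'a"
  assumes scaleC_add_right: "scaleC a (x + y) = scaleC a x + scaleC a y"
    and scaleC_add_left: "scaleC (a + b) x = scaleC a x + scaleC b x"
    and scaleC_scaleC: "scaleC a (scaleC b x) = scaleC (a * b) x"
    and scaleC_one: "scaleC 1 x = x"
    and scaleC_mult_left: "scaleC a x * y = scaleC a (x * y)"
    and scaleC_mult_right: "x * scaleC a y = scaleC a (x * y)"

record ('b, 'x) bimod =
  bcarr :: "'x set"
  badd :: "'x \<Rightarrow> 'x \<Rightarrow> 'x"
  bzero :: "'x"
  bneg :: "'x \<Rightarrow> 'x"
  blact :: "'b \<Rightarrow> 'x \<Rightarrow> 'x"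
  bract :: "'x \<Rightarrow> 'b \<Rightarrow> 'x"

definition bimodule :: "('b::ring_1, 'x) bimod \<Rightarrow> bool" where
  "bimodule M \<longleftrightarrow>
     bzero M \<in> bcarr M \<and>
     (\<forall>x\<in>bcarr M. \<forall>y\<in>bcarr M. badd M x y \<in> bcarr M) \<and>
     (\<forall>x\<in>bcarr M. bneg M x \<in> bcarr M) \<and>
     (\<forall>b. \<forall>x\<in>bcarr M. blact M b x \<in> bcarr M \<and> bract M x b \<in> bcarr M) \<and>
     (\<forall>x\<in>bcarr M. \<forall>y\<in>bcarr M. \<forall>z\<in>bcarr M.
        badd M (badd M x y) z = badd M x (badd M y z)) \<and>
     (\<forall>x\<in>bcarr M. \<forall>y\<in>bcarr M. badd M x y = badd M y x) \<and>
     (\<forall>x\<in>bcarr M. badd M (bzero M) x = x) \<and>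
     (\<forall>x\<in>bcarr M. badd M (bneg M x) x = bzero M) \<and>
     (\<forall>x\<in>bcarr M. blact M 1 x = x \<and> bract M x 1 = x) \<and>
     (\<forall>a b. \<forall>x\<in>bcarr M. blact M (a * b) x = blact M a (blact M b x)) \<and>
     (\<forall>a b. \<forall>x\<in>bcarr M. bract M x (a * b) = bract M (bract M x a) b) \<and>
     (\<forall>a b. \<forall>x\<in>bcarr M. bract M (blact M a x) b = blact M a (bract M x b)) \<and>
     (\<forall>a. \<forall>x\<in>bcarr M. \<forall>y\<in>bcarr M.
        blact M a (badd M x y) = badd M (blact M a x) (blact M a y) \<and>
        bract M (badd M x y) a = badd M (bract M x a) (bract M y a)) \<and>
     (\<forall>a b. \<forall>x\<in>bcarr M.
        blact M (a + b) x = badd M (blact M a x) (blact M b x) \<and>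
        bract M x (a + b) = badd M (bract M x a) (bract M x b))"

section \<open>The components X_l = B \<oplus> X_l-ring, and L(X_l)\<close>

definition comp_carr :: "'i \<Rightarrow> ('i \<Rightarrow> ('b, 'x) bimod) \<Rightarrow> ('b \<times> 'x) set" where
  "comp_carr l M = UNIV \<times> bcarr (M l)"

definition comp_add :: "'i \<Rightarrow> ('i \<Rightarrow> ('b::ring_1, 'x) bimod) \<Rightarrow> 'b \<times> 'x \<Rightarrow> 'b \<times> 'x \<Rightarrow> 'b \<times> 'x" where
  "comp_add l M u v = (fst u + fst v, badd (M l) (snd u) (snd v))"

definition comp_lact :: "'i \<Rightarrow> ('i \<Rightarrow> ('b::ring_1, 'x) bimod) \<Rightarrow> 'b \<Rightarrow> 'b \<times> 'x \<Rightarrow> 'b \<times> 'x" where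
  "comp_lact l M b u = (b * fst u, blact (M l) b (snd u))"

definition comp_ract :: "'i \<Rightarrow> ('i \<Rightarrow> ('b::ring_1, 'x) bimod) \<Rightarrow> 'b \<Rightarrow> 'b \<times> 'x \<Rightarrow> 'b \<times> 'x" where
  "comp_ract l M b u = (fst u * b, bract (M l) (snd u) b)"

definition Lcomp :: "('i \<Rightarrow> ('b::ring_1, 'x) bimod) \<Rightarrow> 'i \<Rightarrow> ('b \<times> 'x \<Rightarrow> 'b \<times> 'x) set" where
  "Lcomp M l = {a. \<forall>u\<in>comp_carr l M.
      a u \<in> comp_carr l M \<and>
      (\<forall>v\<in>comp_carr l M. a (comp_add l M u v) = comp_add l M (a u) (a v)) \<and>
      (\<forall>b. a (comp_lact l M b u) = comp_lact l M b (a u) \<and>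
           a (comp_ract l M b u) = comp_ract l M b (a u))}"

section \<open>The reduced free product X = B \<oplus> (alternating tensor words)\<close>

text \<open>A generator (b, [(i1,x1),...,(in,xn)]) stands for the elementary tensor
  b x1 \<otimes>_B ... \<otimes>_B xn in X_i1-ring \<otimes>_B ... \<otimes>_B X_in-ring; for n = 0 it is b \<in> B.\<close>

type_synonym ('b, 'i, 'x) fpgen = "'b \<times> ('i \<times> 'x) list"
type_synonym ('b, 'i, 'x) fpvec = "('b, 'i, 'x) fpgen \<Rightarrow> int"
type_synonym ('b, 'i, 'x) fpelt = "('b, 'i, 'x) fpvec set"

definition valid_word :: "('i \<Rightarrow> ('b, 'x) bimod) \<Rightarrow> ('i \<times> 'x) list \<Rightarrow> bool" where
  "valid_word M w \<longleftrightarrow> (\<forall>p\<in>set w. snd p \<in> bcarr (M (fst p))) \<and> successively (\<noteq>) (map fst w)"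

definition fp_free :: "('i \<Rightarrow> ('b, 'x) bimod) \<Rightarrow> ('b, 'i, 'x) fpvec set" where
  "fp_free M = {g. finite {k. g k \<noteq> 0} \<and> (\<forall>k. g k \<noteq> 0 \<longrightarrow> valid_word M (snd k))}"

definition gen :: "('b, 'i, 'x) fpgen \<Rightarrow> ('b, 'i, 'x) fpvec" where
  "gen k = (\<lambda>k'. if k' = k then 1 else 0)"

text \<open>The subgroup of relations defining the (multiple) tensor products over B.\<close>
inductive_set fp_rel :: "('i \<Rightarrow> ('b::ring_1, 'x) bimod) \<Rightarrow> ('b, 'i, 'x) fpvec set"
  for M :: "'i \<Rightarrow> ('b::ring_1, 'x) bimod" where
  rel_zero: "(\<lambda>_. 0) \<in> fp_rel M"
| rel_addb: "valid_word M w \<Longrightarrow>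
     (\<lambda>k. gen (b1 + b2, w) k - gen (b1, w) k - gen (b2, w) k) \<in> fp_rel M"
| rel_addx: "valid_word M (w1 @ (i, x) # w2) \<Longrightarrow> y \<in> bcarr (M i) \<Longrightarrow>
     (\<lambda>k. gen (b, w1 @ (i, badd (M i) x y) # w2) k - gen (b, w1 @ (i, x) # w2) k
          - gen (b, w1 @ (i, y) # w2) k) \<in> fp_rel M"
| rel_bal: "valid_word M (w1 @ (i, x) # (j, y) # w2) \<Longrightarrow>
     (\<lambda>k. gen (b, w1 @ (i, bract (M i) x c) # (j, y) # w2) k
          - gen (b, w1 @ (i, x) # (j, blact (M j) c y) # w2) k) \<in> fp_rel M"
| rel_first: "valid_word M ((i, x) # w) \<Longrightarrow>
     (\<lambda>k. gen (b * c, (i, x) # w) k - gen (b, (i, blact (M i) c x) # w) k) \<in> fp_rel M"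
| rel_plus: "g \<in> fp_rel M \<Longrightarrow> h \<in> fp_rel M \<Longrightarrow> (\<lambda>k. g k + h k) \<in> fp_rel M"
| rel_neg: "g \<in> fp_rel M \<Longrightarrow> (\<lambda>k. - g k) \<in> fp_rel M"

definition cls :: "('i \<Rightarrow> ('b::ring_1, 'x) bimod) \<Rightarrow> ('b, 'i, 'x) fpvec \<Rightarrow> ('b, 'i, 'x) fpelt" where
  "cls M g = {(\<lambda>k. g k + r k) | r. r \<in> fp_rel M}"

definition fp_carrier :: "('i \<Rightarrow> ('b::ring_1, 'x) bimod) \<Rightarrow> ('b, 'i, 'x) fpelt set" where
  "fp_carrier M = cls M ` fp_free M"

definition rep :: "('i \<Rightarrow> ('b::ring_1, 'x) bimod) \<Rightarrow> ('b, 'i, 'x) fpelt \<Rightarrow> ('b, 'i, 'x) fpvec" where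
  "rep M C = (SOME g. g \<in> fp_free M \<and> cls M g = C)"

definition ext :: "(('b, 'i, 'x) fpgen \<Rightarrow> ('b, 'i, 'x) fpvec) \<Rightarrow> ('b, 'i, 'x) fpvec \<Rightarrow> ('b, 'i, 'x) fpvec" where
  "ext \<phi> g = (\<lambda>k'. \<Sum>k\<in>{k. g k \<noteq> 0}. g k * \<phi> k k')"

definition lift :: "('i \<Rightarrow> ('b::ring_1, 'x) bimod) \<Rightarrow> (('b, 'i, 'x) fpgen \<Rightarrow> ('b, 'i, 'x) fpvec)
    \<Rightarrow> ('b, 'i, 'x) fpelt \<Rightarrow> ('b, 'i, 'x) fpelt" where
  "lift M \<phi> C = cls M (ext \<phi> (rep M C))"

definition fp_add :: "('i \<Rightarrow> ('b::ring_1, 'x) bimod) \<Rightarrow> ('b, 'i, 'x) fpelt \<Rightarrow> ('b, 'i, 'x) fpelt \<Rightarrow> ('b, 'i, 'x) fpelt" where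
  "fp_add M C D = cls M (\<lambda>k. rep M C k + rep M D k)"

definition fp_lact :: "('i \<Rightarrow> ('b::ring_1, 'x) bimod) \<Rightarrow> 'b \<Rightarrow> ('b, 'i, 'x) fpelt \<Rightarrow> ('b, 'i, 'x) fpelt" where
  "fp_lact M b = lift M (\<lambda>(c, w). gen (b * c, w))"

definition fp_ract :: "('i \<Rightarrow> ('b::ring_1, 'x) bimod) \<Rightarrow> 'b \<Rightarrow> ('b, 'i, 'x) fpelt \<Rightarrow> ('b, 'i, 'x) fpelt" where
  "fp_ract M b = lift M (\<lambda>(c, w). if w = [] then gen (c * b, [])
      else gen (c, butlast w @ [(fst (last w), bract (M (fst (last w))) (snd (last w)) b)]))"

definition fp_emb :: "('i \<Rightarrow> ('b::ring_1, 'x) bimod) \<Rightarrow> 'b \<Rightarrow> ('b, 'i, 'x) fpelt" where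
  "fp_emb M b = cls M (gen (b, []))"

definition fp_one :: "('i \<Rightarrow> ('b::ring_1, 'x) bimod) \<Rightarrow> ('b, 'i, 'x) fpelt" where
  "fp_one M = fp_emb M 1"

definition fp_proj :: "('i \<Rightarrow> ('b::ring_1, 'x) bimod) \<Rightarrow> ('b, 'i, 'x) fpelt \<Rightarrow> 'b" where
  "fp_proj M C = (\<Sum>k\<in>{k. rep M C k \<noteq> 0 \<and> snd k = []}. of_int (rep M C k) * fst k)"

definition Lfp :: "('i \<Rightarrow> ('b::ring_1, 'x) bimod) \<Rightarrow> (('b, 'i, 'x) fpelt \<Rightarrow> ('b, 'i, 'x) fpelt) set" where
  "Lfp M = {T. \<forall>C\<in>fp_carrier M.
      T C \<in> fp_carrier M \<and>
      (\<forall>D\<in>fp_carrier M. T (fp_add M C D) = fp_add M (T C) (T D)) \<and>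
      (\<forall>b. T (fp_lact M b C) = fp_lact M b (T C) \<and> T (fp_ract M b C) = fp_ract M b (T C))}"

definition fp_E :: "('i \<Rightarrow> ('b::ring_1, 'x) bimod) \<Rightarrow> (('b, 'i, 'x) fpelt \<Rightarrow> ('b, 'i, 'x) fpelt) \<Rightarrow> 'b" where
  "fp_E M T = fp_proj M (T (fp_one M))"

text \<open>lambda_l(a) = V_l^{-1} (a \<otimes> I) V_l, written out on elementary tensors:
  if the word starts with a letter from X_l-ring, say b x1 \<otimes> \<zeta>, then
  V_l maps it to (0 \<oplus> b x1) \<otimes> \<zeta>; otherwise b \<zeta> is mapped to (b \<oplus> 0) \<otimes> \<zeta>.
  Then a(...) = c \<oplus> \<eta> and the result is c \<zeta> + \<eta> \<otimes> \<zeta>.\<close>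
definition lam :: "('i \<Rightarrow> ('b::ring_1, 'x) bimod) \<Rightarrow> 'i \<Rightarrow> ('b \<times> 'x \<Rightarrow> 'b \<times> 'x)
    \<Rightarrow> ('b, 'i, 'x) fpelt \<Rightarrow> ('b, 'i, 'x) fpelt" where
  "lam M l a = lift M (\<lambda>(b, w).
     if w \<noteq> [] \<and> fst (hd w) = l
     then (let u = a (0, blact (M l) b (snd (hd w)))
           in (\<lambda>k. gen (fst u, tl w) k + gen (1, (l, snd u) # tl w) k))
     else (let u = a (b, bzero (M l))
           in (\<lambda>k. gen (fst u, w) k + gen (1, (l, snd u) # w) k)))"

definition Pproj :: "('i \<Rightarrow> ('b::ring_1, 'x) bimod) \<Rightarrow> 'i \<Rightarrow> ('b, 'i, 'x) fpelt \<Rightarrow> ('b, 'i, 'x) fpelt" where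
  "Pproj M l = lift M (\<lambda>(b, w). if w = [] \<or> (\<exists>x. w = [(l, x)]) then gen (b, w) else (\<lambda>_. 0))"

definition AF :: "('i \<Rightarrow> ('b::ring_1, 'x) bimod) \<Rightarrow> 'i \<Rightarrow> (('b, 'i, 'x) fpelt \<Rightarrow> ('b, 'i, 'x) fpelt) set" where
  "AF M l = lam M l ` Lcomp M l"

definition AB :: "('i \<Rightarrow> ('b::ring_1, 'x) bimod) \<Rightarrow> 'i \<Rightarrow> (('b, 'i, 'x) fpelt \<Rightarrow> ('b, 'i, 'x) fpelt) set" where
  "AB M l = (\<lambda>a. Pproj M l \<circ> lam M l a \<circ> Pproj M l) ` Lcomp M l"

definition prodop :: "('a \<Rightarrow> 'a) list \<Rightarrow> 'a \<Rightarrow> 'a" where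
  "prodop as = foldr (\<circ>) as id"

end

theory Submission imports Defs begin
definition fs :: "('k \<Rightarrow> int) \<Rightarrow> bool" where "fs g \<longleftrightarrow> finite {k. g k \<noteq> 0}"

lemma fs_gen[simp]: "fs (gen x)"
proof -
  have "{k. gen x k \<noteq> 0} = {x}" by (auto simp: gen_def)
  then show ?thesis by (simp add: fs_def)
qed

lemma fs_add[simp]: "fs g \<Longrightarrow> fs h \<Longrightarrow> fs (\<lambda>k. g k + h k)"
  unfolding fs_def by (rule finite_subset[of _ "{k. g k \<noteq> 0} \<union> {k. h k \<noteq> 0}"]) auto
lemma fs_diff[simp]: "fs g \<Longrightarrow> fs h \<Longrightarrow> fs (\<lambda>k. g k - h k)"
  unfolding fs_def by (rule finite_subset[of _ "{k. g k \<noteq> 0} \<union> {k. h k \<noteq> 0}"]) auto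
lemma fs_neg[simp]: "fs g \<Longrightarrow> fs (\<lambda>k. - g k)"
  unfolding fs_def by simp
lemma fs_zero[simp]: "fs (\<lambda>_. 0)"
  unfolding fs_def by simp

lemma ext_fin: "finite F \<Longrightarrow> {k. g k \<noteq> 0} \<subseteq> F \<Longrightarrow> ext \<phi> g = (\<lambda>k'. \<Sum>k\<in>F. g k * \<phi> k k')"
  unfolding ext_def by (intro ext sum.mono_neutral_left) auto

lemma ext_add: assumes "fs g" "fs h"
  shows "ext \<phi> (\<lambda>k. g k + h k) = (\<lambda>k'. ext \<phi> g k' + ext \<phi> h k')"
proof -
  let ?F = "{k. g k \<noteq> 0} \<union> {k. h k \<noteq> 0}"
  have f: "finite ?F" using assms by (simp add: fs_def)
  have 1: "ext \<phi> (\<lambda>k. g k + h k) = (\<lambda>k'. \<Sum>k\<in>?F. (g k + h k) * \<phi> k k')" by (rule ext_fin[OF f]) auto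
  have 2: "ext \<phi> g = (\<lambda>k'. \<Sum>k\<in>?F. g k * \<phi> k k')" by (rule ext_fin[OF f]) auto
  have 3: "ext \<phi> h = (\<lambda>k'. \<Sum>k\<in>?F. h k * \<phi> k k')" by (rule ext_fin[OF f]) auto
  show ?thesis unfolding 1 2 3 by (simp add: distrib_right sum.distrib)
qed

lemma ext_diff: assumes "fs g" "fs h"
  shows "ext \<phi> (\<lambda>k. g k - h k) = (\<lambda>k'. ext \<phi> g k' - ext \<phi> h k')"
proof -
  let ?F = "{k. g k \<noteq> 0} \<union> {k. h k \<noteq> 0}"
  have f: "finite ?F" using assms by (simp add: fs_def)
  have 1: "ext \<phi> (\<lambda>k. g k - h k) = (\<lambda>k'. \<Sum>k\<in>?F. (g k - h k) * \<phi> k k')" by (rule ext_fin[OF f]) auto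
  have 2: "ext \<phi> g = (\<lambda>k'. \<Sum>k\<in>?F. g k * \<phi> k k')" by (rule ext_fin[OF f]) auto
  have 3: "ext \<phi> h = (\<lambda>k'. \<Sum>k\<in>?F. h k * \<phi> k k')" by (rule ext_fin[OF f]) auto
  show ?thesis unfolding 1 2 3 by (simp add: left_diff_distrib sum_subtractf)
qed

lemma ext_neg: assumes "fs g"
  shows "ext \<phi> (\<lambda>k. - g k) = (\<lambda>k'. - ext \<phi> g k')"
proof -
  let ?F = "{k. g k \<noteq> 0}"
  have f: "finite ?F" using assms by (simp add: fs_def)
  have 1: "ext \<phi> (\<lambda>k. - g k) = (\<lambda>k'. \<Sum>k\<in>?F. (- g k) * \<phi> k k')" by (rule ext_fin[OF f]) auto
  have 2: "ext \<phi> g = (\<lambda>k'. \<Sum>k\<in>?F. g k * \<phi> k k')" by (rule ext_fin[OF f]) auto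
  show ?thesis unfolding 1 2 by (simp add: sum_negf)
qed

lemma ext_gen[simp]: "ext \<phi> (gen x) = \<phi> x"
proof -
  have "ext \<phi> (gen x) = (\<lambda>k'. \<Sum>k\<in>{x}. gen x k * \<phi> k k')" by (rule ext_fin) (auto simp: gen_def)
  then show ?thesis by (simp add: gen_def)
qed

lemma ext_zero[simp]: "ext \<phi> (\<lambda>_. 0) = (\<lambda>_. 0)"
  unfolding ext_def by simp

lemma ext_gen3: "ext \<phi> (\<lambda>k. gen x k - gen y k - gen z k) = (\<lambda>k'. \<phi> x k' - \<phi> y k' - \<phi> z k')"
  by (simp add: ext_diff)
lemma ext_gen2: "ext \<phi> (\<lambda>k. gen x k - gen y k) = (\<lambda>k'. \<phi> x k' - \<phi> y k')"
  by (simp add: ext_diff)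

lemma rel_fs: "r \<in> fp_rel M \<Longrightarrow> fs r"
  by (induction rule: fp_rel.induct) auto

lemma rel_add: "g \<in> fp_rel M \<Longrightarrow> h \<in> fp_rel M \<Longrightarrow> (\<lambda>k. g k + h k) \<in> fp_rel M"
  by (rule fp_rel.rel_plus)
lemma rel_diff: "g \<in> fp_rel M \<Longrightarrow> h \<in> fp_rel M \<Longrightarrow> (\<lambda>k. g k - h k) \<in> fp_rel M"
  using fp_rel.rel_plus[OF _ fp_rel.rel_neg, of g M h] by simp

lemma cls_eq: assumes "(\<lambda>k. g k - h k) \<in> fp_rel M" shows "cls M g = cls M h"
proof -
  { fix g h assume d: "(\<lambda>k. g k - h k) \<in> fp_rel M"
    have "cls M g \<subseteq> cls M h"
    proof
      fix x assume "x \<in> cls M g"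
      then obtain r where r: "r \<in> fp_rel M" "x = (\<lambda>k. g k + r k)" by (auto simp: cls_def)
      have "(\<lambda>k. (g k - h k) + r k) \<in> fp_rel M" using rel_add[OF d r(1)] by simp
      moreover have "x = (\<lambda>k. h k + ((g k - h k) + r k))" using r by auto
      ultimately show "x \<in> cls M h" unfolding cls_def by force
    qed }
  note * = this
  have "(\<lambda>k. h k - g k) \<in> fp_rel M" using fp_rel.rel_neg[OF assms] by simp
  then show ?thesis using *[OF assms] *[of h g] by blast
qed

lemma cls_eqD: assumes "cls M g = cls M h" shows "(\<lambda>k. g k - h k) \<in> fp_rel M"
proof -
  have "h \<in> cls M h" unfolding cls_def using fp_rel.rel_zero by force
  then have "h \<in> cls M g" using assms by simp
  then obtain r where r: "r \<in> fp_rel M" "h = (\<lambda>k. g k + r k)" by (auto simp: cls_def)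
  have "(\<lambda>k. g k - h k) = (\<lambda>k. - r k)" using r(2) by auto
  then show ?thesis using fp_rel.rel_neg[OF r(1)] by simp
qed

lemma free_fs: "g \<in> fp_free M \<Longrightarrow> fs g" by (simp add: fp_free_def fs_def)

lemma rep_cls: assumes "g \<in> fp_free M"
  shows "rep M (cls M g) \<in> fp_free M \<and> cls M (rep M (cls M g)) = cls M g"
  unfolding rep_def by (rule someI[of _ g]) (use assms in auto)

lemma lift_cls: assumes g: "g \<in> fp_free M" and good: "\<forall>r\<in>fp_rel M. ext \<phi> r \<in> fp_rel M"
  shows "lift M \<phi> (cls M g) = cls M (ext \<phi> g)"
proof -
  let ?g = "rep M (cls M g)"
  have r: "?g \<in> fp_free M" "cls M ?g = cls M g" using rep_cls[OF g] by auto
  have d: "(\<lambda>k. ?g k - g k) \<in> fp_rel M" using cls_eqD[OF r(2)] .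
  have "ext \<phi> (\<lambda>k. ?g k - g k) = (\<lambda>k'. ext \<phi> ?g k' - ext \<phi> g k')"
    by (rule ext_diff) (use r g free_fs in auto)
  then have "(\<lambda>k'. ext \<phi> ?g k' - ext \<phi> g k') \<in> fp_rel M" using good d by metis
  then show ?thesis unfolding lift_def by (rule cls_eq)
qed

lemma valid_Nil[simp]: "valid_word M []" by (simp add: valid_word_def)

lemma valid_Cons: "valid_word M (p#w) \<longleftrightarrow> snd p \<in> bcarr (M (fst p)) \<and> valid_word M w \<and> (w = [] \<or> fst p \<noteq> fst (hd w))"
  by (cases w) (auto simp: valid_word_def successively_Cons)

lemma valid_letters: "valid_word M w \<Longrightarrow> map fst w' = map fst w \<Longrightarrow> (\<forall>p\<in>set w'. snd p \<in> bcarr (M (fst p))) \<Longrightarrow> valid_word M w'"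
  unfolding valid_word_def by simp

lemma valid_in: "valid_word M w \<Longrightarrow> p \<in> set w \<Longrightarrow> snd p \<in> bcarr (M (fst p))"
  unfolding valid_word_def by blast

lemma valid_mid: assumes "valid_word M (w1 @ (i, x) # w2)" "y \<in> bcarr (M i)"
  shows "valid_word M (w1 @ (i, y) # w2)"
  by (rule valid_letters[OF assms(1)]) (use assms valid_in[OF assms(1)] in auto)

lemma valid_mid2: assumes "valid_word M (w1 @ (i, x) # (j, y) # w2)" "x' \<in> bcarr (M i)" "y' \<in> bcarr (M j)"
  shows "valid_word M (w1 @ (i, x') # (j, y') # w2)"
  by (rule valid_letters[OF assms(1)]) (use assms valid_in[OF assms(1)] in auto)

lemma valid_prefix: assumes "valid_word M w" "s \<in> bcarr (M l)" "w = [] \<or> fst (hd w) \<noteq> l"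
  shows "valid_word M ((l, s) # w)"
  using assms by (auto simp: valid_Cons)

lemma hd_app: "fst (hd (w1 @ (i, x) # w2)) = fst (hd (w1 @ (i, y) # w2))"
  by (cases w1) auto

lemma bm_zero: "bimodule L \<Longrightarrow> bzero L \<in> bcarr L" unfolding bimodule_def by (elim conjE) metis
lemma bm_addc: "bimodule L \<Longrightarrow> x \<in> bcarr L \<Longrightarrow> y \<in> bcarr L \<Longrightarrow> badd L x y \<in> bcarr L" unfolding bimodule_def by (elim conjE) metis
lemma bm_lactc: "bimodule L \<Longrightarrow> x \<in> bcarr L \<Longrightarrow> blact L b x \<in> bcarr L" unfolding bimodule_def by (elim conjE) metis
lemma bm_ractc: "bimodule L \<Longrightarrow> x \<in> bcarr L \<Longrightarrow> bract L x b \<in> bcarr L" unfolding bimodule_def by (elim conjE) metis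
lemma bm_add00: "bimodule L \<Longrightarrow> badd L (bzero L) (bzero L) = bzero L" unfolding bimodule_def by (elim conjE) metis
lemma bm_lact_sadd: "bimodule L \<Longrightarrow> x \<in> bcarr L \<Longrightarrow> blact L (a + b) x = badd L (blact L a x) (blact L b x)" unfolding bimodule_def by (elim conjE) metis
lemma bm_lact_add: "bimodule L \<Longrightarrow> x \<in> bcarr L \<Longrightarrow> y \<in> bcarr L \<Longrightarrow> blact L a (badd L x y) = badd L (blact L a x) (blact L a y)" unfolding bimodule_def by (elim conjE) metis
lemma bm_lact_mult: "bimodule L \<Longrightarrow> x \<in> bcarr L \<Longrightarrow> blact L (a * b) x = blact L a (blact L b x)" unfolding bimodule_def by (elim conjE) metis
lemma bm_lact_ract: "bimodule L \<Longrightarrow> x \<in> bcarr L \<Longrightarrow> blact L a (bract L x b) = bract L (blact L a x) b" unfolding bimodule_def by (elim conjE) metis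

lemma bm_assoc: "bimodule L \<Longrightarrow> x \<in> bcarr L \<Longrightarrow> y \<in> bcarr L \<Longrightarrow> z \<in> bcarr L \<Longrightarrow> badd L (badd L x y) z = badd L x (badd L y z)" unfolding bimodule_def by (elim conjE) metis
lemma bm_zl: "bimodule L \<Longrightarrow> x \<in> bcarr L \<Longrightarrow> badd L (bzero L) x = x" unfolding bimodule_def by (elim conjE) metis
lemma bm_inv: "bimodule L \<Longrightarrow> x \<in> bcarr L \<Longrightarrow> badd L (bneg L x) x = bzero L" unfolding bimodule_def by (elim conjE) metis
lemma bm_negc: "bimodule L \<Longrightarrow> x \<in> bcarr L \<Longrightarrow> bneg L x \<in> bcarr L" unfolding bimodule_def by (elim conjE) metis
lemma bm_ract_add: "bimodule L \<Longrightarrow> x \<in> bcarr L \<Longrightarrow> y \<in> bcarr L \<Longrightarrow> bract L (badd L x y) c = badd L (bract L x c) (bract L y c)" unfolding bimodule_def by (elim conjE) metis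

lemma bm_ract0: assumes bm: "bimodule L" shows "bract L (bzero L) c = bzero L"
proof -
  let ?z = "bract L (bzero L) c"
  have z0: "bzero L \<in> bcarr L" using bm by (rule bm_zero)
  have zc: "?z \<in> bcarr L" using bm z0 by (rule bm_ractc)
  have nc: "bneg L ?z \<in> bcarr L" using bm zc by (rule bm_negc)
  have e: "?z = badd L ?z ?z" using bm_ract_add[OF bm z0 z0, of c] bm_add00[OF bm] by simp
  have "bzero L = badd L (bneg L ?z) ?z" using bm_inv[OF bm zc] by simp
  also have "\<dots> = badd L (bneg L ?z) (badd L ?z ?z)" using e by simp
  also have "\<dots> = badd L (badd L (bneg L ?z) ?z) ?z" using bm_assoc[OF bm nc zc zc] by simp
  also have "\<dots> = ?z" using bm_inv[OF bm zc] bm_zl[OF bm zc] by simp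
  finally show ?thesis by simp
qed

lemma Lc_carr: "a \<in> Lcomp M l \<Longrightarrow> s \<in> bcarr (M l) \<Longrightarrow> snd (a (b, s)) \<in> bcarr (M l)"
  unfolding Lcomp_def comp_carr_def by (force simp: mem_Times_iff)

lemma Lc_add: "a \<in> Lcomp M l \<Longrightarrow> s \<in> bcarr (M l) \<Longrightarrow> t \<in> bcarr (M l) \<Longrightarrow>
   a (b + c, badd (M l) s t) = (fst (a (b, s)) + fst (a (c, t)), badd (M l) (snd (a (b, s))) (snd (a (c, t))))"
  unfolding Lcomp_def comp_carr_def comp_add_def by auto

lemma Lc_ract: "a \<in> Lcomp M l \<Longrightarrow> s \<in> bcarr (M l) \<Longrightarrow>
   a (b * c, bract (M l) s c) = (fst (a (b, s)) * c, bract (M l) (snd (a (b, s))) c)"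
  unfolding Lcomp_def comp_carr_def comp_ract_def by auto

definition Fv :: "'i \<Rightarrow> 'b::ring_1 \<times> 'x \<Rightarrow> ('i \<times> 'x) list \<Rightarrow> ('b, 'i, 'x) fpvec" where
  "Fv l u r = (\<lambda>k. gen (fst u, r) k + gen (1, (l, snd u) # r) k)"

lemma rel_comb2: "A \<in> fp_rel M \<Longrightarrow> B \<in> fp_rel M \<Longrightarrow> (\<And>k. T k = A k + B k) \<Longrightarrow> T \<in> fp_rel M"
proof -
  assume "A \<in> fp_rel M" "B \<in> fp_rel M" "\<And>k. T k = A k + B k"
  moreover then have "T = (\<lambda>k. A k + B k)" by auto
  ultimately show ?thesis using rel_add by metis
qed

lemma F_add: assumes bml: "bimodule (M l)" and v: "valid_word M r" and h: "r = [] \<or> fst (hd r) \<noteq> l"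
  and c: "snd u \<in> bcarr (M l)" "snd v \<in> bcarr (M l)"
  shows "(\<lambda>k. Fv l (fst u + fst v, badd (M l) (snd u) (snd v)) r k - Fv l u r k - Fv l v r k) \<in> fp_rel M"
proof (rule rel_comb2)
  show "(\<lambda>k. gen (fst u + fst v, r) k - gen (fst u, r) k - gen (fst v, r) k) \<in> fp_rel M"
    by (rule fp_rel.rel_addb[OF v])
  have v2: "valid_word M ((l, snd u) # r)" using valid_prefix[OF v c(1) h] .
  show "(\<lambda>k. gen (1, (l, badd (M l) (snd u) (snd v)) # r) k - gen (1, (l, snd u) # r) k - gen (1, (l, snd v) # r) k) \<in> fp_rel M"
    using fp_rel.rel_addx[of M "[]" l "snd u" r "snd v" 1] v2 c(2) by simp
qed (simp add: Fv_def)

lemma F_ract: assumes bml: "bimodule (M l)" and v: "valid_word M ((j, y) # w2)" and h: "j \<noteq> l"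
  and c: "snd u \<in> bcarr (M l)"
  shows "(\<lambda>k. Fv l (fst u * c, bract (M l) (snd u) c) ((j, y) # w2) k - Fv l u ((j, blact (M j) c y) # w2) k) \<in> fp_rel M"
proof (rule rel_comb2)
  show "(\<lambda>k. gen (fst u * c, (j, y) # w2) k - gen (fst u, (j, blact (M j) c y) # w2) k) \<in> fp_rel M"
    by (rule fp_rel.rel_first[OF v])
  have v2: "valid_word M ((l, snd u) # (j, y) # w2)" using valid_prefix[OF v c(1)] h by simp
  show "(\<lambda>k. gen (1, (l, bract (M l) (snd u) c) # (j, y) # w2) k - gen (1, (l, snd u) # (j, blact (M j) c y) # w2) k) \<in> fp_rel M"
    using fp_rel.rel_bal[of M "[]" l "snd u" j y w2 1 c] v2 by simp
qed (simp add: Fv_def)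

lemma F_addx: assumes v: "valid_word M (w1 @ (i, x) # w2)" and y: "y \<in> bcarr (M i)"
  and h: "fst (hd (w1 @ (i, x) # w2)) \<noteq> l" and c: "snd u \<in> bcarr (M l)"
  shows "(\<lambda>k. Fv l u (w1 @ (i, badd (M i) x y) # w2) k - Fv l u (w1 @ (i, x) # w2) k - Fv l u (w1 @ (i, y) # w2) k) \<in> fp_rel M"
proof (rule rel_comb2)
  show "(\<lambda>k. gen (fst u, w1 @ (i, badd (M i) x y) # w2) k - gen (fst u, w1 @ (i, x) # w2) k - gen (fst u, w1 @ (i, y) # w2) k) \<in> fp_rel M"
    by (rule fp_rel.rel_addx[OF v y])
  have v2: "valid_word M (((l, snd u) # w1) @ (i, x) # w2)" using valid_prefix[OF v c] h by simp
  show "(\<lambda>k. gen (1, (l, snd u) # w1 @ (i, badd (M i) x y) # w2) k - gen (1, (l, snd u) # w1 @ (i, x) # w2) k - gen (1, (l, snd u) # w1 @ (i, y) # w2) k) \<in> fp_rel M"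
    using fp_rel.rel_addx[OF v2 y, of 1] by simp
qed (simp add: Fv_def)

lemma F_bal: assumes v: "valid_word M (w1 @ (i, x) # (j, y) # w2)"
  and h: "fst (hd (w1 @ (i, x) # (j, y) # w2)) \<noteq> l" and c: "snd u \<in> bcarr (M l)"
  shows "(\<lambda>k. Fv l u (w1 @ (i, bract (M i) x cc) # (j, y) # w2) k - Fv l u (w1 @ (i, x) # (j, blact (M j) cc y) # w2) k) \<in> fp_rel M"
proof (rule rel_comb2)
  show "(\<lambda>k. gen (fst u, w1 @ (i, bract (M i) x cc) # (j, y) # w2) k - gen (fst u, w1 @ (i, x) # (j, blact (M j) cc y) # w2) k) \<in> fp_rel M"
    by (rule fp_rel.rel_bal[OF v])
  have v2: "valid_word M (((l, snd u) # w1) @ (i, x) # (j, y) # w2)" using valid_prefix[OF v c] h by simp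
  show "(\<lambda>k. gen (1, (l, snd u) # w1 @ (i, bract (M i) x cc) # (j, y) # w2) k - gen (1, (l, snd u) # w1 @ (i, x) # (j, blact (M j) cc y) # w2) k) \<in> fp_rel M"
    using fp_rel.rel_bal[OF v2, of 1 cc] by simp
qed (simp add: Fv_def)

section \<open>lambda\<close>

definition lamphi :: "('i \<Rightarrow> ('b::ring_1, 'x) bimod) \<Rightarrow> 'i \<Rightarrow> ('b \<times> 'x \<Rightarrow> 'b \<times> 'x) \<Rightarrow> ('b, 'i, 'x) fpgen \<Rightarrow> ('b, 'i, 'x) fpvec" where
  "lamphi M l a = (\<lambda>(b, w).
     if w \<noteq> [] \<and> fst (hd w) = l
     then (let u = a (0, blact (M l) b (snd (hd w)))
           in (\<lambda>k. gen (fst u, tl w) k + gen (1, (l, snd u) # tl w) k))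
     else (let u = a (b, bzero (M l))
           in (\<lambda>k. gen (fst u, w) k + gen (1, (l, snd u) # w) k)))"

lemma lam_lift: "lam M l a = lift M (lamphi M l a)"
  unfolding lam_def lamphi_def ..

lemma lamphi_l: "lamphi M l a (b, (l, x) # r) = Fv l (a (0, blact (M l) b x)) r"
  by (simp add: lamphi_def Fv_def Let_def)

lemma lamphi_nl: "w = [] \<or> fst (hd w) \<noteq> l \<Longrightarrow> lamphi M l a (b, w) = Fv l (a (b, bzero (M l))) w"
  by (auto simp add: lamphi_def Fv_def Let_def)

lemma lam_good: assumes bm: "\<forall>l. bimodule (M l)" and a: "a \<in> Lcomp M l"
  shows "r \<in> fp_rel M \<Longrightarrow> ext (lamphi M l a) r \<in> fp_rel M"
proof (induction rule: fp_rel.induct)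
  case rel_zero
  then show ?case by (simp add: fp_rel.rel_zero)
next
  case (rel_plus g h)
  have "ext (lamphi M l a) (\<lambda>k. g k + h k) = (\<lambda>k'. ext (lamphi M l a) g k' + ext (lamphi M l a) h k')"
    by (rule ext_add[OF rel_fs[OF rel_plus.hyps(1)] rel_fs[OF rel_plus.hyps(2)]])
  then show ?case using rel_add[OF rel_plus.IH] by simp
next
  case (rel_neg g)
  have "ext (lamphi M l a) (\<lambda>k. - g k) = (\<lambda>k'. - ext (lamphi M l a) g k')"
    by (rule ext_neg[OF rel_fs[OF rel_neg.hyps(1)]])
  then show ?case using fp_rel.rel_neg[OF rel_neg.IH] by simp
next
  case (rel_addb w b1 b2)
  have bml: "bimodule (M l)" using bm by simp
  have z: "bzero (M l) \<in> bcarr (M l)" by (rule bm_zero[OF bml])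
  show ?case
  proof (cases "w \<noteq> [] \<and> fst (hd w) = l")
    case True
    then obtain x0 r where w: "w = (l, x0) # r" by (cases w) auto
    have vr: "valid_word M r" "r = [] \<or> fst (hd r) \<noteq> l" "x0 \<in> bcarr (M l)"
      using rel_addb w by (auto simp: valid_Cons)
    let ?s1 = "blact (M l) b1 x0" let ?s2 = "blact (M l) b2 x0"
    have c: "?s1 \<in> bcarr (M l)" "?s2 \<in> bcarr (M l)" using bm_lactc[OF bml vr(3)] by auto
    have e: "a (0, blact (M l) (b1 + b2) x0) = (fst (a (0, ?s1)) + fst (a (0, ?s2)), badd (M l) (snd (a (0, ?s1))) (snd (a (0, ?s2))))"
      using Lc_add[OF a c, where b=0 and c=0] bm_lact_sadd[OF bml vr(3)] by simp
    show ?thesis using F_add[OF bml vr(1) vr(2) Lc_carr[OF a c(1)] Lc_carr[OF a c(2)]]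
      unfolding ext_gen3 w lamphi_l e by simp
  next
    case False
    then have h: "w = [] \<or> fst (hd w) \<noteq> l" by auto
    have e: "a (b1 + b2, bzero (M l)) = (fst (a (b1, bzero (M l))) + fst (a (b2, bzero (M l))), badd (M l) (snd (a (b1, bzero (M l)))) (snd (a (b2, bzero (M l)))))"
      using Lc_add[OF a z z, where b=b1 and c=b2] bm_add00[OF bml] by simp
    show ?thesis using F_add[OF bml rel_addb h Lc_carr[OF a z] Lc_carr[OF a z]]
      unfolding ext_gen3 lamphi_nl[OF h] e by simp
  qed
next
  case (rel_addx w1 i x w2 y b)
  have bml: "bimodule (M l)" using bm by simp
  have bmi: "bimodule (M i)" using bm by simp
  have z: "bzero (M l) \<in> bcarr (M l)" by (rule bm_zero[OF bml])
  show ?case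
  proof (cases "fst (hd (w1 @ (i, x) # w2)) = l")
    case False
    have h: "\<And>s. (w1 @ (i, s) # w2) = [] \<or> fst (hd (w1 @ (i, s) # w2)) \<noteq> l"
      using False by (cases w1) auto
    show ?thesis unfolding ext_gen3 lamphi_nl[OF h]
      by (rule F_addx[OF rel_addx False Lc_carr[OF a z]])
  next
    case True
    show ?thesis
    proof (cases w1)
      case Nil
      then have il: "i = l" using True by simp
      have vr: "valid_word M w2" "w2 = [] \<or> fst (hd w2) \<noteq> l" "x \<in> bcarr (M l)"
        using rel_addx Nil il by (auto simp: valid_Cons)
      have yl: "y \<in> bcarr (M l)" using rel_addx il by simp
      let ?s1 = "blact (M l) b x" let ?s2 = "blact (M l) b y"
      have c: "?s1 \<in> bcarr (M l)" "?s2 \<in> bcarr (M l)" using bm_lactc[OF bml vr(3)] bm_lactc[OF bml yl] by auto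
      have e: "a (0, blact (M l) b (badd (M l) x y)) = (fst (a (0, ?s1)) + fst (a (0, ?s2)), badd (M l) (snd (a (0, ?s1))) (snd (a (0, ?s2))))"
        using Lc_add[OF a c, where b=0 and c=0] bm_lact_add[OF bml vr(3) yl] by simp
      show ?thesis using F_add[OF bml vr(1) vr(2) Lc_carr[OF a c(1)] Lc_carr[OF a c(2)]]
        unfolding ext_gen3 Nil il append_Nil lamphi_l e by simp
    next
      case (Cons p w1')
      then obtain x0 where p: "p = (l, x0)" using True by (cases p) auto
      have v': "valid_word M (w1' @ (i, x) # w2)" and h': "fst (hd (w1' @ (i, x) # w2)) \<noteq> l"
        and x0: "x0 \<in> bcarr (M l)"
        using rel_addx(1) unfolding Cons p by (auto simp: valid_Cons)
      have c: "blact (M l) b x0 \<in> bcarr (M l)" using bm_lactc[OF bml x0] .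
      show ?thesis unfolding ext_gen3 Cons p append_Cons lamphi_l
        by (rule F_addx[OF v' rel_addx(2) h' Lc_carr[OF a c]])
    qed
  qed
next
  case (rel_bal w1 i x j y w2 b c)
  have bml: "bimodule (M l)" using bm by simp
  have z: "bzero (M l) \<in> bcarr (M l)" by (rule bm_zero[OF bml])
  show ?case
  proof (cases "fst (hd (w1 @ (i, x) # (j, y) # w2)) = l")
    case False
    have h: "\<And>s t. (w1 @ (i, s) # (j, t) # w2) = [] \<or> fst (hd (w1 @ (i, s) # (j, t) # w2)) \<noteq> l"
      using False by (cases w1) auto
    show ?thesis unfolding ext_gen2 lamphi_nl[OF h]
      by (rule F_bal[OF rel_bal False Lc_carr[OF a z]])
  next
    case True
    show ?thesis
    proof (cases w1)
      case Nil
      then have il: "i = l" using True by simp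
      have vr: "valid_word M ((j, y) # w2)" "j \<noteq> l" "x \<in> bcarr (M l)"
        using rel_bal Nil il by (auto simp: valid_Cons)
      let ?s = "blact (M l) b x"
      have cs: "?s \<in> bcarr (M l)" using bm_lactc[OF bml vr(3)] .
      have e: "a (0, blact (M l) b (bract (M l) x c)) = (fst (a (0, ?s)) * c, bract (M l) (snd (a (0, ?s))) c)"
        using Lc_ract[OF a cs, where b=0 and c=c] bm_lact_ract[OF bml vr(3)] by simp
      show ?thesis using F_ract[OF bml vr(1) vr(2) Lc_carr[OF a cs, where b=0], where c=c]
        unfolding ext_gen2 Nil il append_Nil lamphi_l e by simp
    next
      case (Cons p w1')
      then obtain x0 where p: "p = (l, x0)" using True by (cases p) auto
      have v': "valid_word M (w1' @ (i, x) # (j, y) # w2)" and h': "fst (hd (w1' @ (i, x) # (j, y) # w2)) \<noteq> l"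
        and x0: "x0 \<in> bcarr (M l)"
        using rel_bal(1) unfolding Cons p by (auto simp: valid_Cons)
      have cc: "blact (M l) b x0 \<in> bcarr (M l)" using bm_lactc[OF bml x0] .
      show ?thesis unfolding ext_gen2 Cons p append_Cons lamphi_l
        by (rule F_bal[OF v' h' Lc_carr[OF a cc]])
    qed
  qed
next
  case (rel_first i x w b c)
  have bml: "bimodule (M l)" using bm by simp
  have z: "bzero (M l) \<in> bcarr (M l)" by (rule bm_zero[OF bml])
  show ?case
  proof (cases "i = l")
    case True
    have xl: "x \<in> bcarr (M l)" using rel_first True by (simp add: valid_Cons)
    have "blact (M l) (b * c) x = blact (M l) b (blact (M l) c x)" using bm_lact_mult[OF bml xl] .
    then show ?thesis unfolding ext_gen2 True lamphi_l by (simp add: fp_rel.rel_zero)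
  next
    case False
    have h1: "(i, x) # w = [] \<or> fst (hd ((i, x) # w)) \<noteq> l" using False by simp
    have h2: "(i, blact (M i) c x) # w = [] \<or> fst (hd ((i, blact (M i) c x) # w)) \<noteq> l" using False by simp
    have e: "a (b * c, bzero (M l)) = (fst (a (b, bzero (M l))) * c, bract (M l) (snd (a (b, bzero (M l)))) c)"
      using Lc_ract[OF a z, where b=b and c=c] bm_ract0[OF bml] by simp
    show ?thesis unfolding ext_gen2 lamphi_nl[OF h1] lamphi_nl[OF h2] e
      by (rule F_ract[OF bml rel_first False Lc_carr[OF a z]])
  qed
qed


definition Pphi :: "('i \<Rightarrow> ('b::ring_1, 'x) bimod) \<Rightarrow> 'i \<Rightarrow> ('b, 'i, 'x) fpgen \<Rightarrow> ('b, 'i, 'x) fpvec" where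
  "Pphi M l = (\<lambda>(b, w). if w = [] \<or> (\<exists>x. w = [(l, x)]) then gen (b, w) else (\<lambda>_. 0))"

lemma P_lift: "Pproj M l = lift M (Pphi M l)"
  unfolding Pproj_def Pphi_def ..

lemma Pphi_mid: "Pphi M l (b, w1 @ (i, s) # w2) = (if w1 = [] \<and> w2 = [] \<and> i = l then gen (b, w1 @ (i, s) # w2) else (\<lambda>_. 0))"
  by (cases w1) (auto simp: Pphi_def)

lemma Pphi_mid2: "Pphi M l (b, w1 @ (i, s) # (j, t) # w2) = (\<lambda>_. 0)"
  by (cases w1) (auto simp: Pphi_def)

lemma Pphi_cons: "Pphi M l (b, (i, s) # w) = (if w = [] \<and> i = l then gen (b, (i, s) # w) else (\<lambda>_. 0))"
  by (auto simp: Pphi_def)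

lemma P_good: "r \<in> fp_rel M \<Longrightarrow> ext (Pphi M l) r \<in> fp_rel M"
proof (induction rule: fp_rel.induct)
  case rel_zero
  then show ?case by (simp add: fp_rel.rel_zero)
next
  case (rel_plus g h)
  have "ext (Pphi M l) (\<lambda>k. g k + h k) = (\<lambda>k'. ext (Pphi M l) g k' + ext (Pphi M l) h k')"
    by (rule ext_add[OF rel_fs[OF rel_plus.hyps(1)] rel_fs[OF rel_plus.hyps(2)]])
  then show ?case using rel_add[OF rel_plus.IH] by simp
next
  case (rel_neg g)
  have "ext (Pphi M l) (\<lambda>k. - g k) = (\<lambda>k'. - ext (Pphi M l) g k')"
    by (rule ext_neg[OF rel_fs[OF rel_neg.hyps(1)]])
  then show ?case using fp_rel.rel_neg[OF rel_neg.IH] by simp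
next
  case (rel_addb w b1 b2)
  then show ?case unfolding ext_gen3
    by (cases "w = [] \<or> (\<exists>x. w = [(l, x)])") (auto simp: Pphi_def fp_rel.rel_addb fp_rel.rel_zero)
next
  case (rel_addx w1 i x w2 y b)
  show ?case unfolding ext_gen3 Pphi_mid
    using fp_rel.rel_addx[OF rel_addx, of b] by (cases "w1 = [] \<and> w2 = [] \<and> i = l") (auto simp: fp_rel.rel_zero)
next
  case (rel_bal w1 i x j y w2 b c)
  then show ?case unfolding ext_gen2 Pphi_mid2
    by (auto simp: fp_rel.rel_zero)
next
  case (rel_first i x w b c)
  show ?case unfolding ext_gen2 Pphi_cons
    using fp_rel.rel_first[OF rel_first, of b c] by (cases "w = [] \<and> i = l") (auto simp: fp_rel.rel_zero)
qed


section \<open>supports\<close>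

definition allP :: "('k \<Rightarrow> int) \<Rightarrow> ('k \<Rightarrow> bool) \<Rightarrow> bool" where
  "allP g P \<longleftrightarrow> (\<forall>k. g k \<noteq> 0 \<longrightarrow> P k)"

definition pres :: "('k \<Rightarrow> 'k \<Rightarrow> int) \<Rightarrow> ('k \<Rightarrow> bool) \<Rightarrow> bool" where
  "pres \<phi> P \<longleftrightarrow> (\<forall>k k'. P k \<longrightarrow> \<phi> k k' \<noteq> 0 \<longrightarrow> P k')"

definition goodphi :: "('i \<Rightarrow> ('b::ring_1, 'x) bimod) \<Rightarrow> (('b, 'i, 'x) fpgen \<Rightarrow> ('b, 'i, 'x) fpvec) \<Rightarrow> bool" where
  "goodphi M \<phi> \<longleftrightarrow> (\<forall>r\<in>fp_rel M. ext \<phi> r \<in> fp_rel M) \<and> (\<forall>k. fs (\<phi> k)) \<and>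
     (\<forall>k k'. valid_word M (snd k) \<longrightarrow> \<phi> k k' \<noteq> 0 \<longrightarrow> valid_word M (snd k'))"

lemma ext_nz: assumes "ext \<phi> g k' \<noteq> 0" shows "\<exists>k. g k \<noteq> 0 \<and> \<phi> k k' \<noteq> 0"
proof (rule ccontr)
  assume "\<not> ?thesis"
  then have "\<forall>k\<in>{k. g k \<noteq> 0}. g k * \<phi> k k' = 0" by auto
  then have "ext \<phi> g k' = 0" unfolding ext_def by (simp add: sum.neutral)
  then show False using assms by simp
qed

lemma ext_allP: "allP g P \<Longrightarrow> pres \<phi> P \<Longrightarrow> allP (ext \<phi> g) P"
  unfolding allP_def pres_def by (meson ext_nz)

lemma free_allP: "g \<in> fp_free M \<longleftrightarrow> fs g \<and> allP g (\<lambda>k. valid_word M (snd k))"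
  unfolding fp_free_def fs_def allP_def by auto

lemma ext_fs: assumes "fs g" "\<forall>k. fs (\<phi> k)" shows "fs (ext \<phi> g)"
proof -
  have "{k'. ext \<phi> g k' \<noteq> 0} \<subseteq> (\<Union>k\<in>{k. g k \<noteq> 0}. {k'. \<phi> k k' \<noteq> 0})"
    using ext_nz by fastforce
  moreover have "finite (\<Union>k\<in>{k. g k \<noteq> 0}. {k'. \<phi> k k' \<noteq> 0})"
    using assms by (simp add: fs_def)
  ultimately show ?thesis unfolding fs_def by (rule finite_subset)
qed

lemma good_free: assumes "goodphi M \<phi>" "g \<in> fp_free M" shows "ext \<phi> g \<in> fp_free M"
proof -
  have "fs (ext \<phi> g)" using assms ext_fs by (auto simp: goodphi_def free_allP)
  moreover have "allP (ext \<phi> g) (\<lambda>k. valid_word M (snd k))"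
    by (rule ext_allP) (use assms in \<open>auto simp: goodphi_def free_allP pres_def\<close>)
  ultimately show ?thesis by (simp add: free_allP)
qed

lemma good_lift: "goodphi M \<phi> \<Longrightarrow> g \<in> fp_free M \<Longrightarrow> lift M \<phi> (cls M g) = cls M (ext \<phi> g)"
  by (rule lift_cls) (auto simp: goodphi_def)

lemma free_add: "g \<in> fp_free M \<Longrightarrow> h \<in> fp_free M \<Longrightarrow> (\<lambda>k. g k + h k) \<in> fp_free M"
  unfolding free_allP allP_def by (auto) (metis add_0)

lemma free_zero: "(\<lambda>_. 0) \<in> fp_free M"
  unfolding free_allP allP_def by auto

lemma Fv_nz: "Fv l u r k' \<noteq> 0 \<Longrightarrow> k' = (fst u, r) \<or> k' = (1, (l, snd u) # r)"
  by (auto simp: Fv_def gen_def split: if_splits)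

lemma Fv_fs: "fs (Fv l u r)" unfolding Fv_def by simp

lemma lam_goodphi: assumes bm: "\<forall>l. bimodule (M l)" and a: "a \<in> Lcomp M l"
  shows "goodphi M (lamphi M l a)"
  unfolding goodphi_def
proof (intro conjI allI impI ballI)
  show "ext (lamphi M l a) r \<in> fp_rel M" if "r \<in> fp_rel M" for r using lam_good[OF bm a that] .
  have bml: "bimodule (M l)" using bm by simp
  show "fs (lamphi M l a k)" for k
    by (cases k) (auto simp: lamphi_def Let_def split: if_split)
  show "valid_word M (snd k')" if v: "valid_word M (snd k)" and nz: "lamphi M l a k k' \<noteq> 0" for k k'
  proof -
    obtain b w where k: "k = (b, w)" by (cases k)
    show ?thesis
    proof (cases "w \<noteq> [] \<and> fst (hd w) = l")
      case True
      then obtain x0 r where w: "w = (l, x0) # r" by (cases w) auto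
      have vr: "valid_word M r" "r = [] \<or> fst (hd r) \<noteq> l" "x0 \<in> bcarr (M l)"
        using v w k by (auto simp: valid_Cons)
      have c: "blact (M l) b x0 \<in> bcarr (M l)" using bm_lactc[OF bml vr(3)] .
      show ?thesis using Fv_nz[OF nz[unfolded k w lamphi_l]] valid_prefix[OF vr(1) Lc_carr[OF a c] vr(2)] vr(1) by auto
    next
      case False
      then have h: "w = [] \<or> fst (hd w) \<noteq> l" by auto
      have vw: "valid_word M w" using v k by simp
      have z: "bzero (M l) \<in> bcarr (M l)" by (rule bm_zero[OF bml])
      show ?thesis using Fv_nz[OF nz[unfolded k lamphi_nl[OF h]]] valid_prefix[OF vw Lc_carr[OF a z] h] vw by auto
    qed
  qed
qed

lemma P_goodphi: "goodphi M (Pphi M l)"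
  unfolding goodphi_def
proof (intro conjI allI impI ballI)
  show "ext (Pphi M l) r \<in> fp_rel M" if "r \<in> fp_rel M" for r using P_good[OF that] .
  show "fs (Pphi M l k)" for k by (cases k) (auto simp: Pphi_def)
  show "valid_word M (snd k')" if "valid_word M (snd k)" "Pphi M l k k' \<noteq> 0" for k k'
    using that by (cases k) (auto simp: Pphi_def gen_def split: if_splits)
qed

definition shortw :: "'i \<Rightarrow> ('b, 'i, 'x) fpgen \<Rightarrow> bool" where
  "shortw l k \<longleftrightarrow> snd k = [] \<or> (\<exists>x. snd k = [(l, x)])"

definition bad :: "'i \<Rightarrow> ('b, 'i, 'x) fpgen \<Rightarrow> bool" where
  "bad j k \<longleftrightarrow> snd k \<noteq> [] \<and> fst (last (snd k)) = j"

lemma lam_short: "pres (lamphi M l a) (shortw l)"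
  unfolding pres_def shortw_def
proof (intro allI impI)
  fix k k' assume s: "snd k = [] \<or> (\<exists>x. snd k = [(l, x)])" and nz: "lamphi M l a k k' \<noteq> 0"
  obtain b w where k: "k = (b, w)" by (cases k)
  show "snd k' = [] \<or> (\<exists>x. snd k' = [(l, x)])"
  proof (cases "w = []")
    case True
    then show ?thesis using Fv_nz[OF nz[unfolded k True lamphi_nl[of "[]" l M a b, simplified]]] by auto
  next
    case False
    then obtain x where w: "w = [(l, x)]" using s k by auto
    show ?thesis using Fv_nz[OF nz[unfolded k w lamphi_l]] by auto
  qed
qed

lemma lam_bad: assumes "j \<noteq> l" shows "pres (lamphi M l a) (bad j)"
  unfolding pres_def bad_def
proof (intro allI impI)
  fix k k' assume s: "snd k \<noteq> [] \<and> fst (last (snd k)) = j" and nz: "lamphi M l a k k' \<noteq> 0"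
  obtain b w where k: "k = (b, w)" by (cases k)
  show "snd k' \<noteq> [] \<and> fst (last (snd k')) = j"
  proof (cases "fst (hd w) = l")
    case True
    then obtain x0 r where w: "w = (l, x0) # r" using s k by (cases w) auto
    have r: "r \<noteq> []" "fst (last r) = j" using s k w assms by auto
    show ?thesis using Fv_nz[OF nz[unfolded k w lamphi_l]] r by auto
  next
    case False
    then have h: "w = [] \<or> fst (hd w) \<noteq> l" by auto
    show ?thesis using Fv_nz[OF nz[unfolded k lamphi_nl[OF h]]] s k by auto
  qed
qed

lemma P_short: "pres (Pphi M l) (shortw l)"
  unfolding pres_def shortw_def by (auto simp: Pphi_def gen_def split: if_splits)

lemma P_kill: assumes "i \<noteq> j" "allP h (bad j)" shows "ext (Pphi M i) h = (\<lambda>_. 0)"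
proof -
  have "\<forall>k. h k \<noteq> 0 \<longrightarrow> Pphi M i k = (\<lambda>_. 0)"
  proof (intro allI impI)
    fix k assume "h k \<noteq> 0"
    then have "bad j k" using assms(2) unfolding allP_def by blast
    then show "Pphi M i k = (\<lambda>_. 0)" using assms(1) by (cases k) (auto simp: bad_def Pphi_def)
  qed
  then show ?thesis unfolding ext_def by (auto intro!: sum.neutral)
qed


lemma prodop_Nil[simp]: "prodop [] x = x" by (simp add: prodop_def)
lemma prodop_Cons[simp]: "prodop (T # Ts) x = T (prodop Ts x)" by (simp add: prodop_def)

lemma op_pres: assumes bm: "\<forall>l. bimodule (M l)" and T: "T \<in> AF M l \<union> AB M l"
  and pl: "\<forall>a\<in>Lcomp M l. pres (lamphi M l a) P" and pp: "pres (Pphi M l) P"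
  and g: "g \<in> fp_free M" "allP g P"
  shows "\<exists>g'. g' \<in> fp_free M \<and> allP g' P \<and> T (cls M g) = cls M g'"
  using T
proof
  assume "T \<in> AF M l"
  then obtain a where a: "a \<in> Lcomp M l" "T = lam M l a" by (auto simp: AF_def)
  have gp: "goodphi M (lamphi M l a)" using lam_goodphi[OF bm a(1)] .
  show ?thesis
    by (rule exI[of _ "ext (lamphi M l a) g"])
      (simp add: a(2) lam_lift good_lift[OF gp g(1)] good_free[OF gp g(1)] ext_allP[OF g(2)] pl a(1))
next
  assume "T \<in> AB M l"
  then obtain a where a: "a \<in> Lcomp M l" "T = Pproj M l \<circ> lam M l a \<circ> Pproj M l" by (auto simp: AB_def)
  have gp: "goodphi M (lamphi M l a)" using lam_goodphi[OF bm a(1)] .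
  have pg: "goodphi M (Pphi M l)" by (rule P_goodphi)
  let ?g1 = "ext (Pphi M l) g"
  have g1: "?g1 \<in> fp_free M" "allP ?g1 P" using good_free[OF pg g(1)] ext_allP[OF g(2) pp] by auto
  let ?g2 = "ext (lamphi M l a) ?g1"
  have g2: "?g2 \<in> fp_free M" "allP ?g2 P" using good_free[OF gp g1(1)] ext_allP[OF g1(2)] pl a(1) by auto
  let ?g3 = "ext (Pphi M l) ?g2"
  have g3: "?g3 \<in> fp_free M" "allP ?g3 P" using good_free[OF pg g2(1)] ext_allP[OF g2(2) pp] by auto
  have "T (cls M g) = cls M ?g3"
    by (simp add: a(2) lam_lift P_lift good_lift[OF pg g(1)] good_lift[OF gp g1(1)] good_lift[OF pg g2(1)])
  then show ?thesis using g3 by blast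
qed

lemma pres_True: "pres \<phi> (\<lambda>_. True)" by (simp add: pres_def)
lemma allP_True: "allP g (\<lambda>_. True)" by (simp add: allP_def)

lemma op_kill: assumes T: "T \<in> AB M i" and ij: "i \<noteq> j"
  and g: "g \<in> fp_free M" and h: "h \<in> fp_free M" "allP h (bad j)"
  shows "T (cls M (\<lambda>k. g k + h k)) = T (cls M g)"
proof -
  from T obtain a where a: "a \<in> Lcomp M i" "T = Pproj M i \<circ> lam M i a \<circ> Pproj M i" by (auto simp: AB_def)
  have pg: "goodphi M (Pphi M i)" by (rule P_goodphi)
  have "Pproj M i (cls M (\<lambda>k. g k + h k)) = cls M (ext (Pphi M i) (\<lambda>k. g k + h k))"
    unfolding P_lift by (rule good_lift[OF pg free_add[OF g h(1)]])
  also have "ext (Pphi M i) (\<lambda>k. g k + h k) = (\<lambda>k'. ext (Pphi M i) g k' + ext (Pphi M i) h k')"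
    by (rule ext_add[OF free_fs[OF g] free_fs[OF h(1)]])
  also have "\<dots> = ext (Pphi M i) g" using P_kill[OF ij h(2)] by simp
  also have "cls M (ext (Pphi M i) g) = Pproj M i (cls M g)"
    unfolding P_lift by (rule good_lift[OF pg g, symmetric])
  finally show ?thesis using a(2) by simp
qed

lemma op_weak: assumes bm: "\<forall>l. bimodule (M l)" and T: "T \<in> AF M i \<union> AB M i" and ij: "i \<noteq> j"
  and g: "g \<in> fp_free M" and h: "h \<in> fp_free M" "allP h (bad j)"
  shows "\<exists>g' h'. g' \<in> fp_free M \<and> h' \<in> fp_free M \<and> allP h' (bad j) \<and>
           T (cls M (\<lambda>k. g k + h k)) = cls M (\<lambda>k. g' k + h' k) \<and> T (cls M g) = cls M g'"
  using T
proof
  assume "T \<in> AF M i"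
  then obtain a where a: "a \<in> Lcomp M i" "T = lam M i a" by (auto simp: AF_def)
  have gp: "goodphi M (lamphi M i a)" using lam_goodphi[OF bm a(1)] .
  have "T (cls M (\<lambda>k. g k + h k)) = cls M (\<lambda>k'. ext (lamphi M i a) g k' + ext (lamphi M i a) h k')"
    unfolding a(2) lam_lift good_lift[OF gp free_add[OF g h(1)]] ext_add[OF free_fs[OF g] free_fs[OF h(1)]] ..
  moreover have "T (cls M g) = cls M (ext (lamphi M i a) g)"
    unfolding a(2) lam_lift good_lift[OF gp g] ..
  moreover have "allP (ext (lamphi M i a) h) (bad j)" using ext_allP[OF h(2) lam_bad] ij by metis
  ultimately show ?thesis using good_free[OF gp g] good_free[OF gp h(1)] by blast
next
  assume ab: "T \<in> AB M i"
  obtain g' where g': "g' \<in> fp_free M" "T (cls M g) = cls M g'"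
    using op_pres[OF bm T, of "\<lambda>_. True" g] g pres_True allP_True by blast
  have "T (cls M (\<lambda>k. g k + h k)) = cls M (\<lambda>k. g' k + 0)"
    using op_kill[OF ab ij g h] g'(2) by simp
  moreover have "allP (\<lambda>_. 0::int) (bad j)" by (simp add: allP_def)
  ultimately show ?thesis using g' free_zero[of M] by (intro exI[of _ g'] exI[of _ "\<lambda>_. 0"]) simp
qed

lemma list_main: assumes bm: "\<forall>l. bimodule (M l)" and ij: "i \<noteq> j"
  shows "set Ts \<subseteq> AF M i \<union> AB M i \<Longrightarrow> g \<in> fp_free M \<Longrightarrow> h \<in> fp_free M \<Longrightarrow> allP h (bad j) \<Longrightarrow>
    (\<exists>g' h'. g' \<in> fp_free M \<and> h' \<in> fp_free M \<and> allP h' (bad j) \<and>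
       prodop Ts (cls M (\<lambda>k. g k + h k)) = cls M (\<lambda>k. g' k + h' k) \<and> prodop Ts (cls M g) = cls M g') \<and>
    ((\<exists>T\<in>set Ts. T \<in> AB M i) \<longrightarrow> prodop Ts (cls M (\<lambda>k. g k + h k)) = prodop Ts (cls M g))"
proof (induction Ts)
  case Nil
  then show ?case by auto
next
  case (Cons T Ts)
  have T: "T \<in> AF M i \<union> AB M i" and Ts: "set Ts \<subseteq> AF M i \<union> AB M i" using Cons.prems(1) by auto
  from Cons.IH[OF Ts Cons.prems(2-4)] obtain g' h' where
    gh: "g' \<in> fp_free M" "h' \<in> fp_free M" "allP h' (bad j)"
      "prodop Ts (cls M (\<lambda>k. g k + h k)) = cls M (\<lambda>k. g' k + h' k)" "prodop Ts (cls M g) = cls M g'"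
    and kill: "(\<exists>T\<in>set Ts. T \<in> AB M i) \<longrightarrow> prodop Ts (cls M (\<lambda>k. g k + h k)) = prodop Ts (cls M g)"
    by blast
  obtain g'' h'' where gh2: "g'' \<in> fp_free M" "h'' \<in> fp_free M" "allP h'' (bad j)"
      "T (cls M (\<lambda>k. g' k + h' k)) = cls M (\<lambda>k. g'' k + h'' k)" "T (cls M g') = cls M g''"
    using op_weak[OF bm T ij gh(1) gh(2) gh(3)] by blast
  have part1: "\<exists>g' h'. g' \<in> fp_free M \<and> h' \<in> fp_free M \<and> allP h' (bad j) \<and>
       prodop (T # Ts) (cls M (\<lambda>k. g k + h k)) = cls M (\<lambda>k. g' k + h' k) \<and> prodop (T # Ts) (cls M g) = cls M g'"
    using gh2 gh(4,5) by auto
  have part2: "prodop (T # Ts) (cls M (\<lambda>k. g k + h k)) = prodop (T # Ts) (cls M g)"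
    if "\<exists>T'\<in>set (T # Ts). T' \<in> AB M i"
  proof (cases "T \<in> AB M i")
    case True
    then show ?thesis using op_kill[OF True ij gh(1) gh(2) gh(3)] gh(4,5) by simp
  next
    case False
    then show ?thesis using that kill by auto
  qed
  show ?case using part1 part2 by blast
qed

lemma list_short: assumes bm: "\<forall>l. bimodule (M l)"
  shows "set Ts \<subseteq> AF M j \<union> AB M j \<Longrightarrow> g \<in> fp_free M \<Longrightarrow> allP g (shortw j) \<Longrightarrow>
    \<exists>g'. g' \<in> fp_free M \<and> allP g' (shortw j) \<and> prodop Ts (cls M g) = cls M g'"
proof (induction Ts)
  case Nil
  then show ?case by auto
next
  case (Cons T Ts)
  then obtain g' where g': "g' \<in> fp_free M" "allP g' (shortw j)" "prodop Ts (cls M g) = cls M g'" by auto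
  have T: "T \<in> AF M j \<union> AB M j" using Cons.prems by auto
  have "\<exists>g''. g'' \<in> fp_free M \<and> allP g'' (shortw j) \<and> T (cls M g') = cls M g''"
    by (rule op_pres[OF bm T _ P_short g'(1,2)]) (simp add: lam_short)
  then show ?case using g'(3) by auto
qed


section \<open>projection\<close>

definition Pv :: "('b::ring_1, 'i, 'x) fpvec \<Rightarrow> 'b" where
  "Pv g = (\<Sum>k\<in>{k. g k \<noteq> 0 \<and> snd k = []}. of_int (g k) * fst k)"

lemma proj_Pv: "fp_proj M C = Pv (rep M C)" by (simp add: fp_proj_def Pv_def)

lemma Pv_fin: assumes fin: "finite F" and sub: "{k. g k \<noteq> 0} \<subseteq> F"
  shows "Pv g = (\<Sum>k\<in>F. if snd k = [] then of_int (g k) * fst k else 0)"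
proof -
  have "{k. g k \<noteq> 0 \<and> snd k = []} = {k\<in>F. g k \<noteq> 0 \<and> snd k = []}" using sub by auto
  then have "Pv g = (\<Sum>k\<in>F. if g k \<noteq> 0 \<and> snd k = [] then of_int (g k) * fst k else 0)"
    by (simp add: Pv_def sum.inter_filter[OF fin])
  also have "\<dots> = (\<Sum>k\<in>F. if snd k = [] then of_int (g k) * fst k else 0)"
    by (rule sum.cong) auto
  finally show ?thesis .
qed

lemma Pv_diff: assumes "fs g" "fs h" shows "Pv (\<lambda>k. g k - h k) = Pv g - Pv h"
proof -
  let ?F = "{k. g k \<noteq> 0} \<union> {k. h k \<noteq> 0}"
  have f: "finite ?F" using assms by (simp add: fs_def)
  have 1: "Pv (\<lambda>k. g k - h k) = (\<Sum>k\<in>?F. if snd k = [] then of_int (g k - h k) * fst k else 0)" by (rule Pv_fin[OF f]) auto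
  have 2: "Pv g = (\<Sum>k\<in>?F. if snd k = [] then of_int (g k) * fst k else 0)" by (rule Pv_fin[OF f]) auto
  have 3: "Pv h = (\<Sum>k\<in>?F. if snd k = [] then of_int (h k) * fst k else 0)" by (rule Pv_fin[OF f]) auto
  show ?thesis unfolding 1 2 3 sum_subtractf[symmetric] by (rule sum.cong) (auto simp: left_diff_distrib)
qed

lemma Pv_add: assumes "fs g" "fs h" shows "Pv (\<lambda>k. g k + h k) = Pv g + Pv h"
proof -
  let ?F = "{k. g k \<noteq> 0} \<union> {k. h k \<noteq> 0}"
  have f: "finite ?F" using assms by (simp add: fs_def)
  have 1: "Pv (\<lambda>k. g k + h k) = (\<Sum>k\<in>?F. if snd k = [] then of_int (g k + h k) * fst k else 0)" by (rule Pv_fin[OF f]) auto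
  have 2: "Pv g = (\<Sum>k\<in>?F. if snd k = [] then of_int (g k) * fst k else 0)" by (rule Pv_fin[OF f]) auto
  have 3: "Pv h = (\<Sum>k\<in>?F. if snd k = [] then of_int (h k) * fst k else 0)" by (rule Pv_fin[OF f]) auto
  show ?thesis unfolding 1 2 3 sum.distrib[symmetric] by (rule sum.cong) (auto simp: distrib_right)
qed

lemma Pv_neg: assumes "fs g" shows "Pv (\<lambda>k. - g k) = - Pv g"
  using Pv_diff[OF fs_zero assms] Pv_diff[OF fs_zero fs_zero] by simp

lemma Pv_gen: "Pv (gen (b, w)) = (if w = [] then b else 0)"
proof -
  have "Pv (gen (b, w)) = (\<Sum>k\<in>{(b, w)}. if snd k = [] then of_int (gen (b, w) k) * fst k else 0)"
    by (rule Pv_fin) (auto simp: gen_def)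
  then show ?thesis by (simp add: gen_def)
qed

lemma Pv_rel: "r \<in> fp_rel M \<Longrightarrow> Pv r = 0"
proof (induction rule: fp_rel.induct)
  case rel_zero
  then show ?case by (simp add: Pv_def)
next
  case (rel_plus g h)
  have "Pv (\<lambda>k. g k + h k) = Pv g + Pv h" by (rule Pv_add[OF rel_fs[OF rel_plus.hyps(1)] rel_fs[OF rel_plus.hyps(2)]])
  then show ?case using rel_plus.IH by simp
next
  case (rel_neg g)
  have "Pv (\<lambda>k. - g k) = - Pv g" by (rule Pv_neg[OF rel_fs[OF rel_neg.hyps(1)]])
  then show ?case using rel_neg.IH by simp
next
  case (rel_addb w b1 b2)
  then show ?case by (simp add: Pv_diff Pv_gen)
next
  case (rel_addx w1 i x w2 y b)
  then show ?case by (simp add: Pv_diff Pv_gen)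
next
  case (rel_bal w1 i x j y w2 b c)
  then show ?case by (simp add: Pv_diff Pv_gen)
next
  case (rel_first i x w b c)
  then show ?case by (simp add: Pv_diff Pv_gen)
qed

lemma proj_cls: assumes g: "g \<in> fp_free M" shows "fp_proj M (cls M g) = Pv g"
proof -
  let ?g = "rep M (cls M g)"
  have r: "?g \<in> fp_free M" "cls M ?g = cls M g" using rep_cls[OF g] by auto
  have d: "(\<lambda>k. ?g k - g k) \<in> fp_rel M" using cls_eqD[OF r(2)] .
  have "Pv ?g - Pv g = 0" using Pv_rel[OF d] Pv_diff[OF free_fs[OF r(1)] free_fs[OF g]] by simp
  then show ?thesis by (simp add: proj_Pv)
qed

lemma rel_comb3: "A \<in> fp_rel M \<Longrightarrow> B \<in> fp_rel M \<Longrightarrow> C \<in> fp_rel M \<Longrightarrow> (\<And>k. T k = A k + B k - C k) \<Longrightarrow> T \<in> fp_rel M"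
proof -
  assume a: "A \<in> fp_rel M" "B \<in> fp_rel M" "C \<in> fp_rel M" "\<And>k. T k = A k + B k - C k"
  have "(\<lambda>k. (A k + B k) - C k) \<in> fp_rel M" by (rule rel_diff[OF rel_add[OF a(1,2)] a(3)])
  moreover have "T = (\<lambda>k. (A k + B k) - C k)" using a(4) by auto
  ultimately show ?thesis by simp
qed

lemma neg_gen0: "(\<lambda>k. - gen (0, w) k) \<in> fp_rel M" if "valid_word M w"
  using fp_rel.rel_addb[OF that, of 0 0] by simp

lemma G_lem: "(\<lambda>k. n * gen (b, []) k - gen (of_int n * b, []) k) \<in> fp_rel M"
proof (induction n rule: int_induct[where k=0])
  case base
  then show ?case using neg_gen0[of M "[]"] by simp
next
  case (step1 n)
  have R: "(\<lambda>k. gen (of_int n * b + b, []) k - gen (of_int n * b, []) k - gen (b, []) k) \<in> fp_rel M"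
    using fp_rel.rel_addb[of M "[]"] by simp
  show ?case
    by (rule rel_comb3[OF step1(2) fp_rel.rel_zero R]) (simp add: distrib_right algebra_simps)
next
  case (step2 n)
  have R: "(\<lambda>k. gen (of_int (n - 1) * b + b, []) k - gen (of_int (n - 1) * b, []) k - gen (b, []) k) \<in> fp_rel M"
    using fp_rel.rel_addb[of M "[]"] by simp
  have e: "of_int (n - 1) * b + b = of_int n * b" by (simp add: algebra_simps)
  show ?case
    by (rule rel_comb3[OF step2(2) R[unfolded e] fp_rel.rel_zero]) (simp add: algebra_simps)
qed

lemma sum_lem: "finite F \<Longrightarrow> (\<forall>k\<in>F. snd k = []) \<Longrightarrow>
  (\<lambda>k'. (\<Sum>k\<in>F. n k * gen k k') - gen (\<Sum>k\<in>F. of_int (n k) * fst k, []) k') \<in> fp_rel M"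
proof (induction F rule: finite_induct)
  case empty
  then show ?case using neg_gen0[of M "[]"] by simp
next
  case (insert k F)
  obtain b where k: "k = (b, [])" using insert.prems by (cases k) auto
  let ?c = "\<Sum>k\<in>F. of_int (n k) * fst k"
  have IH: "(\<lambda>k'. (\<Sum>k\<in>F. n k * gen k k') - gen (?c, []) k') \<in> fp_rel M" using insert by auto
  have G: "(\<lambda>k'. n k * gen (b, []) k' - gen (of_int (n k) * b, []) k') \<in> fp_rel M" by (rule G_lem)
  have R: "(\<lambda>k'. gen (?c + of_int (n k) * b, []) k' - gen (?c, []) k' - gen (of_int (n k) * b, []) k') \<in> fp_rel M"
    using fp_rel.rel_addb[of M "[]"] by simp
  have nk: "(b, []) \<notin> F" using insert.hyps k by simp
  show ?case
    by (rule rel_comb3[OF rel_add[OF IH G] fp_rel.rel_zero R]) (simp add: k sum.insert[OF insert.hyps(1) nk] algebra_simps)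
qed


theorem lemma6p3:
  fixes M :: "'i \<Rightarrow> ('b::cplx_algebra_1, 'x) bimod"
    and S :: "'i \<Rightarrow> (('b, 'i, 'x) fpelt \<Rightarrow> ('b, 'i, 'x) fpelt) set"
    and i j :: 'i
    and as bs :: "(('b, 'i, 'x) fpelt \<Rightarrow> ('b, 'i, 'x) fpelt) list"
  assumes "\<forall>l. bimodule (M l)"
    and "\<forall>l. S l \<subseteq> AF M l \<union> AB M l"
    and "i \<noteq> j"
    and "as \<noteq> []" and "set as \<subseteq> S i"
    and "bs \<noteq> []" and "set bs \<subseteq> S j"
    and "\<exists>a\<in>set as. a \<in> S i \<inter> AB M i"
  shows "prodop as (prodop bs (fp_one M)) = prodop as (fp_emb M (fp_E M (prodop bs)))"
proof -
  note bm = assms(1)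
  have bsj: "set bs \<subseteq> AF M j \<union> AB M j" using assms(2,7) by blast
  have asi: "set as \<subseteq> AF M i \<union> AB M i" using assms(2,5) by blast
  have g0: "gen (1, []) \<in> fp_free M" unfolding free_allP using fs_gen by (auto simp: allP_def gen_def)
  have g0s: "allP (gen (1, [])) (shortw j)" by (simp add: allP_def gen_def shortw_def)
  obtain g where g: "g \<in> fp_free M" "allP g (shortw j)" "prodop bs (fp_one M) = cls M g"
    using list_short[OF bm bsj g0 g0s] by (auto simp: fp_one_def fp_emb_def)
  define ge where "ge = (\<lambda>k. if snd k = [] then g k else 0)"
  define gb where "gb = (\<lambda>k. if snd k = [] then 0 else g k)"
  have gsplit: "g = (\<lambda>k. ge k + gb k)" by (auto simp: ge_def gb_def)
  have fg: "fs g" using free_fs[OF g(1)] .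
  have suppe: "{k. ge k \<noteq> 0} = {k. g k \<noteq> 0 \<and> snd k = []}" by (auto simp: ge_def)
  have fe: "finite {k. ge k \<noteq> 0}" using fg unfolding fs_def suppe by simp
  have "allP ge (\<lambda>k. valid_word M (snd k))" using g(1) by (auto simp: ge_def free_allP allP_def)
  then have gef: "ge \<in> fp_free M" using fe by (simp add: free_allP fs_def)
  have gbf: "gb \<in> fp_free M" using g(1)
    by (auto simp: gb_def free_allP allP_def fs_def intro: finite_subset[OF _ fg[unfolded fs_def]])
  have gbb: "allP gb (bad j)" unfolding allP_def
  proof (intro allI impI)
    fix k assume "gb k \<noteq> 0"
    then have "snd k \<noteq> []" "g k \<noteq> 0" by (auto simp: gb_def split: if_splits)
    then obtain x where "snd k = [(j, x)]" using g(2) unfolding allP_def shortw_def by blast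
    then show "bad j k" by (simp add: bad_def)
  qed
  have E: "fp_E M (prodop bs) = Pv g" unfolding fp_E_def g(3) by (rule proj_cls[OF g(1)])
  have Pg: "Pv g = (\<Sum>k\<in>{k. ge k \<noteq> 0}. of_int (ge k) * fst k)"
    unfolding suppe Pv_def by (rule sum.cong) (auto simp: ge_def)
  have gee: "ge = (\<lambda>k'. \<Sum>k\<in>{k. ge k \<noteq> 0}. ge k * gen k k')"
  proof
    fix k'
    have "(\<Sum>k\<in>{k. ge k \<noteq> 0}. ge k * gen k k') = (\<Sum>k\<in>{k. ge k \<noteq> 0}. if k = k' then ge k else 0)"
      by (rule sum.cong) (auto simp: gen_def)
    also have "\<dots> = ge k'" using fe by (simp add: sum.delta')
    finally show "ge k' = (\<Sum>k\<in>{k. ge k \<noteq> 0}. ge k * gen k k')" by simp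
  qed
  have "(\<lambda>k'. (\<Sum>k\<in>{k. ge k \<noteq> 0}. ge k * gen k k') - gen (Pv g, []) k') \<in> fp_rel M"
    unfolding Pg by (rule sum_lem[OF fe]) (auto simp: ge_def)
  then have "(\<lambda>k'. ge k' - gen (Pv g, []) k') \<in> fp_rel M" using gee by metis
  then have emb: "fp_emb M (fp_E M (prodop bs)) = cls M ge" unfolding E fp_emb_def
    by (intro cls_eq[symmetric])
  have AB: "\<exists>T\<in>set as. T \<in> AB M i" using assms(8) by blast
  have "prodop as (cls M (\<lambda>k. ge k + gb k)) = prodop as (cls M ge)"
    using list_main[OF bm assms(3) asi gef gbf gbb] AB by blast
  then show ?thesis unfolding g(3) emb gsplit[symmetric] by simp
qed

end
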